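(* Let $\Omega\subset\mathbb{P}(\mathbb{R}^d)$ be a properly convex domain and let $g_n\in\mathrm{SL}^{\pm}(d,\mathbb{R})$ be a sequence with $g_n\Omega=\Omega$ for all $n$ and $\mu_{1,2}(g_n)\to\infty$. Then for every $x\in\Omega$, the set of accumulation points in $\mathbb{P}(\mathbb{R}^d)$ of the sequence $g_nx$ equals the set of accumulation points of the sequence $E_1^+(g_n)$.
   Context: A properly convex domain is the projectivization of an open convex cone whose closure lies in an affine chart. For $g\in\mathrm{GL}(d,\mathbb{R})$, $\sigma_1(g)\ge\dots\ge\sigma_d(g)$ are the eigenvalues of $\sqrt{gg^T}$ and $\mu_{1,2}(g)=\log\sigma_1(g)-\log\sigma_2(g)$. If $\sigma_1(g)>\sigma_2(g)$, $E_1^+(g)\in\mathbb{P}(\mathbb{R}^d)$ is the line spanned by the longest axis of the ellipsoid $\{gv:\|v\|=1\}$ (defined for all large $n$ here). *)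

theory Defs
  imports "HOL-Analysis.Analysis" "HOL-Computational_Algebra.Polynomial" "HOL-Library.Multiset"
begin

text \<open>A point [v] of P(R^d) (v nonzero) is represented by the orthogonal projection
  matrix onto the line spanned by v. This map is a homeomorphism of P(R^d) onto its
  (closed) image in the space of d x d matrices, so accumulation points in P(R^d)
  correspond exactly to accumulation points in the matrix space.\<close>

definition proj_pt :: "real^'n \<Rightarrow> real^'n^'n" where
  "proj_pt v = (\<chi> i j. v$i * v$j / (norm v)\<^sup>2)"

definition proj_act :: "real^'n^'n \<Rightarrow> real^'n^'n \<Rightarrow> real^'n^'n" where
  "proj_act g p = proj_pt (g *v (SOME u. u \<noteq> 0 \<and> proj_pt u = p))"

text \<open>Properly convex domain: projectivization of an open convex cone whose closure
  (minus the origin) lies in an affine chart {v. w \<bullet> v \<noteq> 0}.\<close>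
definition open_convex_cone :: "(real^'n) set \<Rightarrow> bool" where
  "open_convex_cone C \<longleftrightarrow> open C \<and> convex C \<and> C \<noteq> {} \<and> 0 \<notin> C \<and>
     (\<forall>v\<in>C. \<forall>t::real. t > 0 \<longrightarrow> t *\<^sub>R v \<in> C)"

definition properly_convex_domain :: "(real^'n^'n) set \<Rightarrow> bool" where
  "properly_convex_domain \<Omega> \<longleftrightarrow>
     (\<exists>C. open_convex_cone C \<and> \<Omega> = proj_pt ` C \<and>
          (\<exists>w::real^'n. \<forall>u \<in> closure C - {0}. w \<bullet> u \<noteq> 0))"

definition charpoly :: "real^'n^'n \<Rightarrow> real poly" where
  "charpoly A = det (\<chi> i j. (if i = j then [:0, 1:] else 0) - [:A$i$j:])"

definition eigs_desc :: "real^'n^'n \<Rightarrow> real list" where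
  "eigs_desc A = rev (sorted_list_of_multiset (proots (charpoly A)))"

text \<open>sigma k g (k >= 1) is the k-th largest eigenvalue of sqrt(g g^T), i.e. the
  square root of the k-th largest eigenvalue of g g^T (counted with multiplicity).\<close>
definition sigma :: "nat \<Rightarrow> real^'n^'n \<Rightarrow> real" where
  "sigma k g = sqrt (eigs_desc (g ** transpose g) ! (k - 1))"

definition mu12 :: "real^'n^'n \<Rightarrow> real" where
  "mu12 g = ln (sigma 1 g) - ln (sigma 2 g)"

text \<open>E_1^+(g): the line spanned by the longest axis of the ellipsoid {g v. |v| = 1},
  i.e. spanned by g v for a unit vector v maximizing |g v| (unique up to sign when
  sigma_1 > sigma_2).\<close>
definition E1 :: "real^'n^'n \<Rightarrow> real^'n^'n" where
  "E1 g = proj_pt (g *v (SOME v. norm v = 1 \<and> (\<forall>w. norm w = 1 \<longrightarrow> norm (g *v w) \<le> norm (g *v v))))"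

definition acc_pts :: "(nat \<Rightarrow> 'a::metric_space) \<Rightarrow> 'a set" where
  "acc_pts s = {L. \<exists>r. strict_mono r \<and> (s \<circ> r) \<longlonglongrightarrow> L}"

end

theory Submission
  imports Defs
begin


lemma poly_det: "poly (det M) x = det (\<chi> i j. poly (M$i$j) x)"
  unfolding det_def by (simp add: poly_sum poly_prod)

lemma det_zero_kernel:
  fixes N :: "real^'n^'n"
  assumes "z \<noteq> 0" "N *v z = 0" shows "det N = 0"
  using assms invertible_det_nz invertible_left_inverse matrix_left_invertible_ker by metis

lemma kernel_det_zero:
  fixes N :: "real^'n^'n"
  assumes "det N = 0" shows "\<exists>z. z \<noteq> 0 \<and> N *v z = 0"
  using assms invertible_det_nz invertible_left_inverse matrix_left_invertible_ker by metis

lemma mat_vec: "mat x *v (p::real^'n) = x *\<^sub>R p"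
  unfolding vec_eq_iff mat_def matrix_vector_mult_def by (simp add: if_distrib[where f="\<lambda>t. t * _"] cong: if_cong)

lemma poly_charpoly: "poly (charpoly A) x = det (\<chi> i j. (if i = j then x else 0) - A$i$j)"
  unfolding charpoly_def poly_det by (intro arg_cong[where f=det]) (simp add: vec_eq_iff)


lemma poly_no_roots_proots:
  fixes D :: "real poly"
  assumes "\<And>x. poly D x \<noteq> 0" shows "proots D = {#}"
proof -
  have "D \<noteq> 0" using assms by auto
  then have "set_mset (proots D) = {}" using assms by simp
  then show ?thesis by simp
qed

lemma root_mult2:
  fixes A :: "real^'n^'n" and p q :: "real^'n"
  assumes cp: "charpoly A \<noteq> 0" and np: "norm p = 1" and qnz: "q \<noteq> 0" and pq: "inner p q = 0"
    and Ap: "A *v p = a *\<^sub>R p" and Aq: "A *v q = b *\<^sub>R q"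
  shows "{#a, b#} \<subseteq># proots (charpoly A)"
proof -
  fix k :: 'n
  obtain Q where oQ: "orthogonal_matrix Q" and Qk: "Q *v (axis k 1) = p"
    using orthogonal_matrix_exists_basis np by blast
  have Qcol: "Q$l$k = p$l" for l
    using Qk by (simp add: vec_eq_iff matrix_vector_mult_def axis_def if_distrib cong: if_cong)
  define X :: "real poly^'n^'n" where "X = (\<chi> i j. (if i = j then [:0, 1:] else 0) - [:A$i$j:])"
  define QL :: "real poly^'n^'n" where "QL = (\<chi> i j. [:Q$i$j:])"
  define M where "M = X ** QL"
  define PL :: "real poly^'n" where "PL = (\<chi> i. [:p$i:])"
  have cpX: "charpoly A = det X" unfolding X_def charpoly_def by simp
  have polyM: "poly (M$i$j) x = ((mat x - A) ** Q)$i$j" for i j x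
    unfolding M_def X_def QL_def matrix_matrix_mult_def
    by (simp add: poly_sum mat_def if_distrib[of "\<lambda>p. poly p x"] algebra_simps cong: if_cong)
  have colk: "M$i$k = [:-a,1:] * PL$i" for i
  proof -
    have "poly (M$i$k) x = poly ([:-a,1:] * PL$i) x" for x
    proof -
      have "poly (M$i$k) x = ((mat x - A) *v p)$i"
        unfolding polyM by (simp add: matrix_matrix_mult_def matrix_vector_mult_def Qcol)
      also have "\<dots> = x * p$i - a * p$i"
      proof -
        have "(mat x *v p)$i = x * p$i"
          unfolding mat_def matrix_vector_mult_def by (simp add: if_distrib[where f="\<lambda>t. t * _"] cong: if_cong)
        moreover have "(mat x - A) *v p = mat x *v p - A *v p" by (rule matrix_vector_mult_diff_rdistrib)
        ultimately show ?thesis using Ap by simp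
      qed
      finally show ?thesis by (simp add: PL_def algebra_simps)
    qed
    then have "poly (M$i$k) = poly ([:-a,1:] * PL$i)" by (rule ext)
    then show ?thesis by (simp add: poly_eq_poly_eq_iff)
  qed
  define D' where "D' = det (\<chi> i. if i = k then PL else row i (transpose M))"
  have tM: "transpose M = (\<chi> i. if i = k then [:-a,1:] *s PL else row i (transpose M))"
  proof (rule vec_eq_iff[THEN iffD2], intro allI)
    fix i show "transpose M $ i = (\<chi> i. if i = k then [:-a,1:] *s PL else row i (transpose M)) $ i"
    proof (cases "i = k")
      case True
      then show ?thesis by (simp add: vec_eq_iff transpose_def colk)
    next
      case False
      then show ?thesis by (simp add: row_def)
    qed
  qed
  have "det M = det (transpose M)" by simp
  also have "\<dots> = det (\<chi> i. if i = k then [:-a,1:] *s PL else row i (transpose M))"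
    using tM by (rule arg_cong)
  also have "\<dots> = [:-a,1:] * D'"
    unfolding D'_def by (rule det_row_mul)
  finally have "det M = [:-a,1:] * D'" .
  moreover have "det M = charpoly A * det QL"
    unfolding M_def cpX by (simp add: det_mul)
  ultimately have eq: "charpoly A * det QL = [:-a,1:] * D'" by simp
  have dQ: "det Q \<noteq> 0" using det_orthogonal_matrix[OF oQ] by auto
  have pQL: "poly (det QL) x = det Q" for x
    unfolding poly_det QL_def by simp
  have QL0: "proots (det QL) = {#}"
    by (rule poly_no_roots_proots) (simp add: pQL dQ)
  have QLnz: "det QL \<noteq> 0" using pQL dQ by (metis poly_0)
  have D'nz: "D' \<noteq> 0" using eq cp QLnz by auto
  have "proots (charpoly A) = proots (charpoly A * det QL)"
    using proots_mult[OF cp QLnz] QL0 by simp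
  also have "\<dots> = {#a#} + proots D'"
    unfolding eq using proots_mult[OF _ D'nz, of "[:-a,1:]"] by simp
  finally have pr: "proots (charpoly A) = {#a#} + proots D'" .
  define z where "z = transpose Q *v q"
  have zk: "z$k = 0"
    using pq unfolding z_def by (simp add: matrix_vector_mult_def transpose_def Qcol inner_vec_def)
  have "Q *v z = (Q ** transpose Q) *v q" unfolding z_def by (rule matrix_vector_mul_assoc)
  then have Qz: "Q *v z = q" using oQ by (simp add: orthogonal_matrix_def)
  have znz: "z \<noteq> 0" using Qz qnz by auto
  define N where "N = (\<chi> i j. poly ((\<chi> i. if i = k then PL else row i (transpose M))$i$j) b)"
  have "transpose N *v z = ((mat b - A) ** Q) *v z"
  proof -
    have "(transpose N *v z)$i = (((mat b - A) ** Q) *v z)$i" for i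
    proof -
      have Nji: "N$j$i = (if j = k then p$i else ((mat b - A) ** Q)$i$j)" for i j
        by (cases "j = k") (simp_all add: N_def PL_def row_def transpose_def polyM)
      show ?thesis
        unfolding matrix_vector_mult_def transpose_def vec_lambda_beta Nji
        by (intro sum.cong refl) (auto simp: zk)
    qed
    then show ?thesis by (simp add: vec_eq_iff)
  qed
  also have "\<dots> = (mat b - A) *v q"
    by (simp only: matrix_vector_mul_assoc[symmetric] Qz)
  also have "\<dots> = 0" using Aq by (simp add: matrix_vector_mult_diff_rdistrib mat_vec)
  finally have "det N = 0" using det_zero_kernel[OF znz] by (metis det_transpose)
  then have "poly D' b = 0" unfolding D'_def poly_det N_def .
  then have "b \<in># proots D'" using D'nz by simp
  then show ?thesis unfolding pr by (simp add: mset_subset_eq_single)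
qed



lemma sorted_second:
  fixes M :: "real multiset"
  assumes sub: "{#a, b#} \<subseteq># M" and ba: "b \<le> a" and le: "\<forall>x\<in>#M. x \<le> a"
  defines "L \<equiv> rev (sorted_list_of_multiset M)"
  shows "L!0 \<le> a" "b \<le> L!1" "L!1 \<le> L!0"
proof -
  define S where "S = sorted_list_of_multiset M"
  have mS: "mset S = M" and sS: "sorted S" unfolding S_def by auto
  have "size {#a, b#} \<le> size M" using sub by (rule size_mset_mono)
  moreover have "length S = size M" using mS by (metis size_mset)
  ultimately have m2: "length S \<ge> 2" by simp
  define m where "m = length S"
  have L0: "L!0 = S!(m-1)"
    using m2 rev_nth[of 0 S] unfolding L_def S_def[symmetric] m_def by force
  have L1: "L!1 = S!(m-2)"
    using m2 rev_nth[of 1 S] unfolding L_def S_def[symmetric] m_def by (force simp: numeral_2_eq_2)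
  have "S!(m-1) \<in> set S" using m2 unfolding m_def by simp
  then have "S!(m-1) \<in># M" using mS by auto
  then show "L!0 \<le> a" using le L0 by simp
  show "L!1 \<le> L!0" unfolding L0 L1 using m2 sS unfolding m_def by (intro sorted_nth_mono) auto
  define x where "x = S!(m-1)"
  have Sne: "S \<noteq> []" using m2 by auto
  have Sdec: "butlast S @ [x] = S"
    using append_butlast_last_id[OF Sne] last_conv_nth[OF Sne] unfolding x_def m_def by simp
  have "M = add_mset x (mset (butlast S))"
  proof -
    have "mset (butlast S @ [x]) = add_mset x (mset (butlast S))" by simp
    then show ?thesis using Sdec mS by simp
  qed
  then have sub2: "{#a, b#} \<subseteq># add_mset x (mset (butlast S))" using sub by simp
  obtain y where y: "y \<in> set (butlast S)" "b \<le> y"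
  proof (cases "x = b")
    case True
    then have "add_mset b {#a#} \<subseteq># add_mset b (mset (butlast S))" using sub2 by (simp add: add_mset_commute)
    then have "{#a#} \<subseteq># mset (butlast S)" by simp
    then show ?thesis using that ba by auto
  next
    case False
    have "b \<in># add_mset x (mset (butlast S))" using sub2 by (rule mset_subset_eqD) simp
    then have "b \<in># mset (butlast S)" using False by simp
    then show ?thesis using that by auto
  qed
  then obtain j where j: "j < length (butlast S)" "butlast S ! j = y" by (meson in_set_conv_nth)
  then have Sj: "S!j = y" and jm: "j \<le> m - 2" unfolding m_def by (auto simp: nth_butlast)
  have "S!j \<le> S!(m-2)" using sS jm m2 unfolding m_def by (intro sorted_nth_mono) auto
  then show "b \<le> L!1" using y Sj L1 by simp
qed



lemma cont_gnorm: "continuous_on S (\<lambda>w. norm ((g::real^'n^'n) *v w))"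
  by (intro continuous_intros linear_continuous_on matrix_vector_mul_linear linear_linear[THEN iffD1])

definition wmax :: "real^'n^'n \<Rightarrow> real^'n" where
  "wmax g = (SOME v. norm v = 1 \<and> (\<forall>w. norm w = 1 \<longrightarrow> norm (g *v w) \<le> norm (g *v v)))"

lemma E1_wmax: "E1 g = proj_pt (g *v wmax g)"
  unfolding E1_def wmax_def ..

lemma wmax: "norm (wmax g) = 1 \<and> (\<forall>w. norm w = 1 \<longrightarrow> norm (g *v w) \<le> norm (g *v wmax g))"
proof -
  have "\<exists>x\<in>sphere 0 1. \<forall>y\<in>sphere 0 1. norm (g *v y) \<le> norm (g *v x)"
  proof (rule continuous_attains_sup)
    show "sphere (0::real^'n) 1 \<noteq> {}"
      using norm_axis_1[of undefined] by (metis empty_iff mem_sphere_0)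
  qed (auto intro: cont_gnorm)
  then have "\<exists>v. norm v = 1 \<and> (\<forall>w. norm w = 1 \<longrightarrow> norm (g *v w) \<le> norm (g *v v))" by auto
  then show ?thesis unfolding wmax_def by (rule someI_ex)
qed

lemma scale_bound:
  fixes g :: "real^'n^'n"
  assumes "\<forall>y\<in>S. norm y = 1 \<longrightarrow> norm (g *v y) \<le> K"
    and "\<And>c y. y \<in> S \<Longrightarrow> c *\<^sub>R y \<in> S" and "y \<in> S" and "K \<ge> 0"
  shows "norm (g *v y) \<le> K * norm y"
proof (cases "y = 0")
  case True then show ?thesis by simp
next
  case False
  define u where "u = (1 / norm y) *\<^sub>R y"
  have "u \<in> S" "norm u = 1" using assms False unfolding u_def by auto
  then have "norm (g *v u) \<le> K" using assms by auto
  moreover have "g *v y = norm y *\<^sub>R (g *v u)"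
    using False unfolding u_def by (simp add: matrix_vector_mult_scaleR)
  then have "norm (g *v y) = norm y * norm (g *v u)" by simp
  ultimately show ?thesis by (metis mult.commute mult_left_mono norm_ge_zero)
qed

lemma quad0:
  fixes c K :: real
  assumes "\<forall>t. 2 * t * c \<le> t^2 * K" shows "c = 0"
proof (rule ccontr)
  assume c: "c \<noteq> 0"
  define a where "a = \<bar>K\<bar> + 1"
  have a: "a > 0" "K \<le> a" unfolding a_def by auto
  define t where "t = c / (2 * a)"
  have "2 * t * c \<le> t^2 * K" using assms by simp
  moreover have "t^2 * K \<le> t^2 * a" using a by (intro mult_left_mono) auto
  moreover have "2 * t * c = c^2 / a" unfolding t_def using a by (simp add: power2_eq_square field_simps)
  moreover have "t^2 * a = c^2 / (4 * a)" unfolding t_def using a by (simp add: power2_eq_square field_simps)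
  moreover have "c^2 / (4 * a) < c^2 / a"
    using c a by (intro divide_strict_left_mono) auto
  ultimately show False by linarith
qed

lemma orth_max:
  fixes g :: "real^'n^'n"
  assumes b: "\<forall>t::real. norm (g *v (u + t *\<^sub>R z)) \<le> norm (g *v u) * norm (u + t *\<^sub>R z)"
    and u1: "norm u = 1" and uz: "inner u z = 0"
  shows "inner (g *v u) (g *v z) = 0"
proof -
  have "2 * t * inner (g *v u) (g *v z) \<le> t^2 * ((norm (g *v u))^2 * (norm z)^2 - (norm (g *v z))^2)" for t
  proof -
    have "(norm (g *v (u + t *\<^sub>R z)))^2 \<le> (norm (g *v u) * norm (u + t *\<^sub>R z))^2"
      using b by (simp add: power_mono)
    moreover have "(norm (g *v (u + t *\<^sub>R z)))^2 = (norm (g *v u))^2 + 2 * t * inner (g *v u) (g *v z) + t^2 * (norm (g *v z))^2"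
      unfolding matrix_vector_right_distrib matrix_vector_mult_scaleR power2_norm_eq_inner
      by (simp add: inner_add_left inner_add_right inner_commute power2_eq_square algebra_simps)
    moreover have "(norm (u + t *\<^sub>R z))^2 = 1 + t^2 * (norm z)^2"
      using u1 uz unfolding power2_norm_eq_inner
      by (simp add: inner_add_left inner_add_right inner_commute power2_eq_square algebra_simps norm_eq_1[symmetric])
    ultimately show ?thesis by (simp add: power_mult_distrib algebra_simps)
  qed
  then show ?thesis by (intro quad0) auto
qed

lemma decomp:
  fixes w r :: "real^'n"
  assumes "norm w = 1" "\<forall>y. inner w y = 0 \<longrightarrow> inner r y = 0"
  shows "r = inner r w *\<^sub>R w"
proof -
  define y where "y = r - inner r w *\<^sub>R w"
  have ww: "inner w w = 1" using assms(1) by (simp add: norm_eq_1)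
  have "inner w y = 0" unfolding y_def using ww by (simp add: inner_diff_right inner_commute)
  then have "inner r y = 0" using assms by auto
  then have "inner y y = 0" unfolding y_def using \<open>inner w y = 0\<close>[unfolded y_def]
    by (simp add: inner_diff_left inner_diff_right inner_commute)
  then show ?thesis unfolding y_def by simp
qed

lemma inner_transpose: "inner (transpose A *v x) y = inner x ((A::real^'n^'m) *v y)"
  unfolding inner_vec_def matrix_vector_mult_def transpose_def
  by (simp add: sum_distrib_left sum_distrib_right mult_ac) (rule sum.swap)

lemma exists_orth_unit:
  fixes w :: "real^'n"
  assumes "CARD('n) \<ge> 2"
  shows "\<exists>y. norm y = 1 \<and> inner w y = 0"
proof -
  obtain i j :: 'n where ij: "i \<noteq> j"
  proof -
    have "\<not> (\<forall>i j::'n. i = j)"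
    proof
      assume "\<forall>i j::'n. i = j"
      then have "(UNIV::'n set) \<subseteq> {undefined}" by auto
      then have "CARD('n) \<le> card {undefined::'n}" by (intro card_mono) auto
      then have "CARD('n) \<le> 1" by simp
      then show False using assms by simp
    qed
    then show ?thesis using that by blast
  qed
  define z where "z = w$j *\<^sub>R axis i (1::real) - w$i *\<^sub>R axis j 1"
  have wz: "inner w z = 0" unfolding z_def by (simp add: inner_diff_right inner_axis)
  show ?thesis
  proof (cases "z = 0")
    case False
    then show ?thesis using wz by (intro exI[of _ "(1/norm z) *\<^sub>R z"]) auto
  next
    case True
    then have "z$j = 0" by simp
    then have "w$i = 0" using ij unfolding z_def by (simp add: axis_def)
    then show ?thesis by (intro exI[of _ "axis i 1"]) (simp add: inner_axis)
  qed
qed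



lemma inner_transpose': "inner x ((A::real^'n^'m) *v y) = inner (x v* A) y"
  using inner_transpose[of A x y] by simp

lemma inner_vmul: "inner (x v* A) y = inner x ((A::real^'n^'m) *v y)"
  using inner_transpose[of A x y] by simp

lemma inner_vmul2: "inner y (x v* A) = inner x ((A::real^'n^'m) *v y)"
  using inner_vmul[of x A y] by (simp add: inner_commute)

lemma SV:
  fixes g :: "real^'n^'n"
  assumes d2: "CARD('n) \<ge> 2" and dg: "det g \<noteq> 0"
  defines "w \<equiv> wmax g"
  shows "norm w = 1" "\<forall>x. norm (g *v x) \<le> norm (g *v w) * norm x" "0 < sigma 2 g"
    "sigma 2 g \<le> sigma 1 g" "sigma 1 g \<le> norm (g *v w)"
    "\<forall>y. inner w y = 0 \<longrightarrow> norm (g *v y) \<le> sigma 2 g * norm y"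
proof -
  have w1: "norm w = 1" and wm: "\<forall>v. norm v = 1 \<longrightarrow> norm (g *v v) \<le> norm (g *v w)"
    using wmax[of g] unfolding w_def by auto
  show "norm w = 1" by (fact w1)
  have gbound: "norm (g *v x) \<le> norm (g *v w) * norm x" for x
    by (rule scale_bound[where S=UNIV]) (use wm in auto)
  show "\<forall>x. norm (g *v x) \<le> norm (g *v w) * norm x" using gbound by auto
  have ginj: "g *v x = 0 \<Longrightarrow> x = 0" for x
    using det_zero_kernel dg by blast
  have gw0: "g *v w \<noteq> 0" using w1 ginj by (metis norm_zero zero_neq_one)
  define lam where "lam = (norm (g *v w))^2"
  define S where "S = {y. inner w y = 0}"
  have Ssc: "c *\<^sub>R y \<in> S" if "y \<in> S" for c y using that unfolding S_def by simp
  have orthw: "inner (g *v w) (g *v y) = 0" if "inner w y = 0" for y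
    by (rule orth_max[OF _ w1 that]) (use gbound in auto)
  have eigw: "transpose g *v (g *v w) = lam *\<^sub>R w"
  proof -
    have "transpose g *v (g *v w) = inner (transpose g *v (g *v w)) w *\<^sub>R w"
      by (rule decomp[OF w1]) (auto simp: inner_vmul orthw)
    also have "inner (transpose g *v (g *v w)) w = lam"
      unfolding inner_transpose lam_def by (simp add: power2_norm_eq_inner)
    finally show ?thesis .
  qed
  have eigw': "(g *v w) v* g = lam *\<^sub>R w" using eigw by simp
  obtain y2 where y2S: "y2 \<in> S" and y21: "norm y2 = 1"
    and y2m: "\<forall>y\<in>S. norm y = 1 \<longrightarrow> norm (g *v y) \<le> norm (g *v y2)"
  proof -
    have "\<exists>x\<in>S \<inter> sphere 0 1. \<forall>y\<in>S \<inter> sphere 0 1. norm (g *v y) \<le> norm (g *v x)"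
    proof (rule continuous_attains_sup)
      show "compact (S \<inter> sphere 0 1)" unfolding S_def
        by (intro closed_Int_compact closed_hyperplane compact_sphere)
      show "S \<inter> sphere 0 1 \<noteq> {}" using exists_orth_unit[OF d2, of w] unfolding S_def by auto
    qed (rule cont_gnorm)
    then show ?thesis using that by auto
  qed
  define mu where "mu = (norm (g *v y2))^2"
  have y2bound: "norm (g *v y) \<le> norm (g *v y2) * norm y" if "y \<in> S" for y
    by (rule scale_bound[where S=S]) (use y2m Ssc that in auto)
  have orth2: "inner (g *v y2) (g *v z) = 0" if "z \<in> S" "inner y2 z = 0" for z
  proof (rule orth_max[OF _ y21 that(2)], intro allI)
    fix t :: real
    have "y2 + t *\<^sub>R z \<in> S" using y2S that(1) unfolding S_def by (simp add: inner_add_right)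
    then show "norm (g *v (y2 + t *\<^sub>R z)) \<le> norm (g *v y2) * norm (y2 + t *\<^sub>R z)" by (rule y2bound)
  qed
  have eig2: "transpose g *v (g *v y2) = mu *\<^sub>R y2"
  proof -
    define r2 where "r2 = transpose g *v (g *v y2) - mu *\<^sub>R y2"
    have "inner w r2 = inner (g *v w) (g *v y2) - mu * inner w y2"
      unfolding r2_def by (simp add: inner_diff_right inner_vmul2 inner_commute)
    then have r2S: "r2 \<in> S" using orthw y2S unfolding S_def by simp
    have "inner y2 r2 = (norm (g *v y2))^2 - mu * (norm y2)^2"
      unfolding r2_def by (simp add: inner_diff_right inner_vmul2 power2_norm_eq_inner)
    then have r2y: "inner y2 r2 = 0" using y21 unfolding mu_def by simp
    have "inner r2 r2 = inner (g *v y2) (g *v r2) - mu * inner y2 r2"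
      unfolding r2_def by (simp add: inner_diff_left inner_vmul inner_commute)
    then have "inner r2 r2 = 0" using orth2[OF r2S r2y] r2y by simp
    then show ?thesis unfolding r2_def by simp
  qed
  have eig2': "(g *v y2) v* g = mu *\<^sub>R y2" using eig2 by simp
  define A where "A = g ** transpose g"
  define p where "p = (1 / norm (g *v w)) *\<^sub>R (g *v w)"
  have p1: "norm p = 1" unfolding p_def using gw0 by simp
  have Ap: "A *v p = lam *\<^sub>R p"
    unfolding A_def p_def by (simp add: matrix_vector_mul_assoc[symmetric] matrix_vector_mult_scaleR eigw')
  have q0: "g *v y2 \<noteq> 0" using y21 ginj by (metis norm_zero zero_neq_one)
  have Aq: "A *v (g *v y2) = mu *\<^sub>R (g *v y2)"
    unfolding A_def by (simp add: matrix_vector_mul_assoc[symmetric] matrix_vector_mult_scaleR eig2')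
  have pq: "inner p (g *v y2) = 0" unfolding p_def using orthw y2S unfolding S_def by simp
  have rootb: "x \<le> lam" if "poly (charpoly A) x = 0" for x
  proof -
    have e: "(\<chi> i j. (if i = j then x else 0) - A$i$j) = mat x - A"
      by (simp add: vec_eq_iff mat_def)
    have "det (mat x - A) = 0" using that unfolding poly_charpoly e .
    then obtain z where z0: "z \<noteq> 0" and "(mat x - A) *v z = 0" using kernel_det_zero by blast
    then have Az: "A *v z = x *\<^sub>R z" by (simp add: matrix_vector_mult_diff_rdistrib mat_vec)
    define v where "v = transpose g *v z"
    have "x * (norm z)^2 = inner z (A *v z)" using Az by (simp add: power2_norm_eq_inner)
    also have "\<dots> = (norm v)^2" unfolding A_def v_def
      by (simp add: matrix_vector_mul_assoc[symmetric] inner_transpose' power2_norm_eq_inner)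
    finally have xz: "x * (norm z)^2 = (norm v)^2" .
    have "(norm v)^2 = inner z (g *v v)" unfolding v_def by (simp add: inner_transpose' power2_norm_eq_inner)
    also have "\<dots> \<le> norm z * norm (g *v v)" by (rule norm_cauchy_schwarz)
    also have "\<dots> \<le> norm z * (norm (g *v w) * norm v)" by (intro mult_left_mono gbound) auto
    finally have "norm v * norm v \<le> (norm z * norm (g *v w)) * norm v" by (simp add: power2_eq_square mult_ac)
    then have "norm v \<le> norm z * norm (g *v w)"
      by (cases "norm v = 0") (auto simp: mult_le_cancel_right)
    then have "(norm v)^2 \<le> (norm z * norm (g *v w))^2" by (intro power_mono) auto
    then have "x * (norm z)^2 \<le> lam * (norm z)^2" using xz unfolding lam_def by (simp add: power_mult_distrib mult_ac)
    then show ?thesis using z0 by simp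
  qed
  have cp: "charpoly A \<noteq> 0" using rootb[of "lam + 1"] by auto
  have mulam: "mu \<le> lam" unfolding mu_def lam_def using wm y21 by (intro power_mono) auto
  have sub: "{#lam, mu#} \<subseteq># proots (charpoly A)"
    by (rule root_mult2[OF cp p1 q0 pq Ap Aq])
  have le: "\<forall>x\<in># proots (charpoly A). x \<le> lam" using cp rootb by simp
  define L where "L = eigs_desc A"
  have L: "L!0 \<le> lam" "mu \<le> L!1" "L!1 \<le> L!0"
    using sorted_second[OF sub mulam le] unfolding L_def eigs_desc_def by auto
  have s1: "sigma 1 g = sqrt (L!0)" and s2: "sigma 2 g = sqrt (L!1)"
    unfolding sigma_def L_def A_def by simp_all
  have mu0: "mu > 0" unfolding mu_def using q0 by simp
  have s2mu: "norm (g *v y2) \<le> sigma 2 g"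
    unfolding s2 using L(2) unfolding mu_def by (metis norm_ge_zero real_sqrt_le_mono real_sqrt_unique)
  show "0 < sigma 2 g" using s2mu q0 by (meson zero_less_norm_iff less_le_trans)  
  show "sigma 2 g \<le> sigma 1 g" unfolding s1 s2 using L(3) by simp
  show "sigma 1 g \<le> norm (g *v w)" unfolding s1 using L(1) unfolding lam_def by (metis norm_ge_zero real_sqrt_le_mono real_sqrt_unique)
  show "\<forall>y. inner w y = 0 \<longrightarrow> norm (g *v y) \<le> sigma 2 g * norm y"
  proof (intro allI impI)
    fix y assume "inner w y = 0"
    then have "norm (g *v y) \<le> norm (g *v y2) * norm y" using y2bound unfolding S_def by auto
    also have "\<dots> \<le> sigma 2 g * norm y" using s2mu by (intro mult_right_mono) auto
    finally show "norm (g *v y) \<le> sigma 2 g * norm y" .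
  qed
qed



lemma proj_pt_scale: assumes "c \<noteq> 0" shows "proj_pt (c *\<^sub>R u) = proj_pt u"
proof -
  have n: "(norm (c *\<^sub>R u))^2 = c^2 * (norm u)^2" by (simp add: power_mult_distrib)
  have c2: "c^2 \<noteq> 0" using assms by simp
  have "(c * u$i) * (c * u$j) / (c^2 * (norm u)^2) = u$i * u$j / (norm u)^2" for i j
  proof -
    have "(c * u$i) * (c * u$j) = c^2 * (u$i * u$j)" by (simp add: power2_eq_square mult_ac)
    moreover have "c^2 * (u$i * u$j) / (c^2 * (norm u)^2) = u$i * u$j / (norm u)^2"
      using c2 by (rule mult_divide_mult_cancel_left)
    ultimately show ?thesis by (simp only:)
  qed
  then show ?thesis unfolding proj_pt_def n by (simp add: vec_eq_iff)
qed

lemma norm_sq_vec: "(norm (y::real^'n))^2 = (\<Sum>j\<in>UNIV. y$j * y$j)"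
  by (simp add: power2_norm_eq_inner inner_vec_def)

lemma proj_pt_mul: "proj_pt x *v y = (inner x y / (norm x)^2) *\<^sub>R x"
  unfolding proj_pt_def matrix_vector_mult_def inner_vec_def
  by (simp add: vec_eq_iff sum_distrib_left sum_divide_distrib mult_ac)

lemma proj_pt_eq:
  assumes "x \<noteq> 0" "y \<noteq> 0" "proj_pt x = proj_pt y"
  shows "y = (inner x y / (norm x)^2) *\<^sub>R x"
proof -
  have "proj_pt y *v y = y"
    using assms(2) unfolding proj_pt_mul by (simp add: power2_norm_eq_inner)
  then show ?thesis using assms(3) proj_pt_mul[of x y] by simp
qed

lemma proj_act_pt:
  assumes "y \<noteq> 0"
  shows "proj_act g (proj_pt y) = proj_pt (g *v y)"
proof -
  define u where "u = (SOME u. u \<noteq> 0 \<and> proj_pt u = proj_pt y)"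
  have "u \<noteq> 0 \<and> proj_pt u = proj_pt y" unfolding u_def by (rule someI[of _ y]) (use assms in simp)
  then have u: "u \<noteq> 0" "proj_pt u = proj_pt y" by auto
  define c where "c = inner u y / (norm u)^2"
  have yc: "y = c *\<^sub>R u" unfolding c_def by (rule proj_pt_eq[OF u(1) assms u(2)])
  then have c0: "c \<noteq> 0" using assms by auto
  have "proj_act g (proj_pt y) = proj_pt (g *v u)" unfolding proj_act_def u_def ..
  also have "\<dots> = proj_pt (c *\<^sub>R (g *v u))" using c0 by (simp add: proj_pt_scale)
  also have "\<dots> = proj_pt (g *v y)" unfolding yc by (simp add: matrix_vector_mult_scaleR)
  finally show ?thesis .
qed

lemma acc_eq:
  fixes x y :: "nat \<Rightarrow> 'a::real_normed_vector"
  assumes "(\<lambda>n. x n - y n) \<longlonglongrightarrow> 0"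
  shows "acc_pts x = acc_pts y"
proof -
  have *: "acc_pts a \<subseteq> acc_pts b" if d: "(\<lambda>n. a n - b n) \<longlonglongrightarrow> 0" for a b :: "nat \<Rightarrow> 'a"
  proof
    fix L assume "L \<in> acc_pts a"
    then obtain r where r: "strict_mono r" "(a \<circ> r) \<longlonglongrightarrow> L" unfolding acc_pts_def by auto
    have "((\<lambda>n. a n - b n) \<circ> r) \<longlonglongrightarrow> 0" by (rule LIMSEQ_subseq_LIMSEQ[OF d r(1)])
    then have "(\<lambda>k. (a \<circ> r) k - ((\<lambda>n. a n - b n) \<circ> r) k) \<longlonglongrightarrow> L - 0"
      by (intro tendsto_diff r(2))
    then have "(b \<circ> r) \<longlonglongrightarrow> L" by (simp add: comp_def)
    then show "L \<in> acc_pts b" unfolding acc_pts_def using r(1) by auto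
  qed
  have "(\<lambda>n. y n - x n) \<longlonglongrightarrow> 0"
    using tendsto_minus[OF assms] by (simp add: minus_diff_eq)
  then show ?thesis using *[OF assms] * by blast
qed

lemma proj_pt_cont: "continuous_on K proj_pt" if "0 \<notin> K"
  unfolding proj_pt_def
  using that by (intro continuous_intros) auto

lemma closure_neg:
  fixes C :: "(real^'n) set"
  assumes "x \<in> closure (uminus ` C)" shows "- x \<in> closure C"
proof -
  obtain s where s: "\<forall>n. s n \<in> uminus ` C" "s \<longlonglongrightarrow> x" using assms closure_sequential by metis
  have "- s n \<in> C" for n using s(1) by (metis imageE minus_minus)
  then have "\<forall>n. - s n \<in> C" by blast
  moreover have "(\<lambda>n. - s n) \<longlonglongrightarrow> - x" using s(2) by (rule tendsto_minus)
  ultimately show ?thesis using closure_sequential by metis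
qed



lemma proj_complement_norm:
  fixes z w :: "real^'n"
  assumes "norm w = 1"
  shows "inner w (z - inner z w *\<^sub>R w) = 0" "norm (z - inner z w *\<^sub>R w) \<le> norm z"
proof -
  have ww: "inner w w = 1" using assms by (simp add: norm_eq_1)
  show "inner w (z - inner z w *\<^sub>R w) = 0" using ww by (simp add: inner_diff_right inner_commute)
  have "(norm (z - inner z w *\<^sub>R w))^2 = (norm z)^2 - (inner z w)^2"
    unfolding power2_norm_eq_inner using ww
    by (simp add: inner_diff_left inner_diff_right inner_commute power2_eq_square)
  then have "(norm (z - inner z w *\<^sub>R w))^2 \<le> (norm z)^2" by simp
  then show "norm (z - inner z w *\<^sub>R w) \<le> norm z" by (rule power2_le_imp_le) simp
qed

theorem lemma7p1:
  fixes \<Omega> :: "(real^'n^'n) set" and g :: "nat \<Rightarrow> real^'n^'n" and v :: "real^'n"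
  assumes "CARD('n) \<ge> 2"
    and "properly_convex_domain \<Omega>"
    and "\<forall>n. det (g n) = 1 \<or> det (g n) = -1"
    and "\<forall>n. proj_act (g n) ` \<Omega> = \<Omega>"
    and "filterlim (\<lambda>n. mu12 (g n)) at_top sequentially"
    and "v \<noteq> 0" and "proj_pt v \<in> \<Omega>"
  shows "acc_pts (\<lambda>n. proj_pt (g n *v v)) = acc_pts (\<lambda>n. E1 (g n))"
proof -
  note d2 = assms(1)
  obtain C w0 where occ: "open_convex_cone C" and Om: "\<Omega> = proj_pt ` C"
    and chart: "\<forall>u \<in> closure C - {0}. inner w0 u \<noteq> 0"
    using assms(2) unfolding properly_convex_domain_def by blast
  have Copen: "open C" and Cconv: "convex C" and C0: "0 \<notin> C"
    and Ccone: "\<And>u t. u \<in> C \<Longrightarrow> t > 0 \<Longrightarrow> t *\<^sub>R u \<in> C"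
    using occ unfolding open_convex_cone_def by auto
  define f where "f u = inner w0 u" for u
  have flin: "f (a *\<^sub>R x + b *\<^sub>R y) = a * f x + b * f y" for a b x y
    unfolding f_def by (simp add: inner_add_right)
  have fC: "f u \<noteq> 0" if "u \<in> C" for u
    using chart that C0 closure_subset unfolding f_def by fastforce
  have fCC: "f u \<noteq> 0" if "u \<in> C \<union> uminus ` C" for u
    using that fC unfolding f_def by auto
  have dg: "det (g n) \<noteq> 0" for n using assms(3) by (metis zero_neq_neg_one zero_neq_one)
  have ginj: "g n *v x = 0 \<Longrightarrow> x = 0" for n x using det_zero_kernel dg by blast
  have pres: "g n *v y \<in> C \<union> uminus ` C" if yC: "y \<in> C" for n y
  proof -
    have y0: "y \<noteq> 0" using yC C0 by auto
    have "proj_pt y \<in> \<Omega>" using yC Om by auto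
    then have "proj_act (g n) (proj_pt y) \<in> \<Omega>" using assms(4) by blast
    then obtain u where uC: "u \<in> C" and pu: "proj_pt (g n *v y) = proj_pt u"
      unfolding proj_act_pt[OF y0] Om by auto
    have u0: "u \<noteq> 0" using uC C0 by auto
    have gy0: "g n *v y \<noteq> 0" using ginj y0 by blast
    define c where "c = inner u (g n *v y) / (norm u)^2"
    have gyc: "g n *v y = c *\<^sub>R u" unfolding c_def by (rule proj_pt_eq[OF u0 gy0 pu[symmetric]])
    then have "c \<noteq> 0" using gy0 by auto
    then consider "c > 0" | "c < 0" by linarith
    then show ?thesis
    proof cases
      case 1 then show ?thesis using gyc Ccone uC by auto
    next
      case 2
      have "(- c) *\<^sub>R u \<in> C" using 2 Ccone[OF uC, of "-c"] by simp
      moreover have "g n *v y = - ((- c) *\<^sub>R u)" using gyc by simp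
      ultimately show ?thesis by blast
    qed
  qed
  have samesign: "f (g n *v y1) * f (g n *v y2) > 0" if "y1 \<in> C" "y2 \<in> C" for n y1 y2
  proof (rule ccontr)
    define a where "a = f (g n *v y1)"
    define b where "b = f (g n *v y2)"
    assume "\<not> f (g n *v y1) * f (g n *v y2) > 0"
    moreover have "a \<noteq> 0" "b \<noteq> 0" unfolding a_def b_def using pres fCC that by auto
    ultimately have ab: "a * b < 0" unfolding a_def b_def
      by (metis linorder_neqE_linordered_idom mult_eq_0_iff)
    define t where "t = a / (a - b)"
    have t01: "0 \<le> t" "t \<le> 1" "(1 - t) * a + t * b = 0"
    proof -
      from ab have "(a > 0 \<and> b < 0) \<or> (a < 0 \<and> b > 0)" by (metis mult_pos_pos mult_neg_neg not_less_iff_gr_or_eq mult_eq_0_iff less_asym)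
      then show "0 \<le> t" "t \<le> 1" "(1 - t) * a + t * b = 0" unfolding t_def
        by (auto simp: field_simps)
    qed
    define y where "y = (1 - t) *\<^sub>R y1 + t *\<^sub>R y2"
    have "y \<in> C" unfolding y_def using Cconv that t01 by (simp add: convex_def)
    then have "f (g n *v y) \<noteq> 0" using pres fCC by blast
    moreover have "f (g n *v y) = (1 - t) * a + t * b"
      unfolding y_def a_def b_def by (simp add: matrix_vector_right_distrib matrix_vector_mult_scaleR flin)
    ultimately show False using t01 by simp
  qed
  obtain x0 where x0C: "x0 \<in> C" and x0eq: "\<And>n. proj_pt (g n *v v) = proj_pt (g n *v x0)"
  proof -
    obtain u where uC: "u \<in> C" and pu: "proj_pt u = proj_pt v" using assms(7) Om by auto
    have u0: "u \<noteq> 0" using uC C0 by auto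
    define c where "c = inner u v / (norm u)^2"
    have vc: "v = c *\<^sub>R u" unfolding c_def by (rule proj_pt_eq[OF u0 assms(6) pu])
    then have "c \<noteq> 0" using assms(6) by auto
    then consider "c > 0" | "c < 0" by linarith
    then show ?thesis
    proof cases
      case 1 then show ?thesis using that[of v] vc Ccone uC by auto
    next
      case 2
      have "(- c) *\<^sub>R u \<in> C" using 2 Ccone[OF uC, of "-c"] by simp
      moreover have "proj_pt (g n *v v) = proj_pt (g n *v ((- c) *\<^sub>R u))" for n
      proof -
        have m: "g n *v (- x) = - (g n *v x)" for x using matrix_vector_mult_scaleR[of "g n" "-1" x] by simp
        have "g n *v v = (-1) *\<^sub>R (g n *v ((- c) *\<^sub>R u))" using vc by (simp add: matrix_vector_mult_scaleR m)
        then show ?thesis using proj_pt_scale[of "-1"] by simp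
      qed
      ultimately show ?thesis using that by blast
    qed
  qed
  have x00: "x0 \<noteq> 0" using x0C C0 by auto
  define w where "w n = wmax (g n)" for n
  define N where "N n = norm (g n *v w n)" for n
  define \<rho> where "\<rho> n = sigma 2 (g n) / sigma 1 (g n)" for n
  note SVn = SV[OF d2 dg]
  have w1: "norm (w n) = 1" for n unfolding w_def using SVn by blast
  have s2pos: "0 < sigma 2 (g n)" for n using SVn by blast
  have s12: "sigma 2 (g n) \<le> sigma 1 (g n)" for n using SVn by blast
  have s1N: "sigma 1 (g n) \<le> N n" for n unfolding N_def w_def using SVn by blast
  have orthb0: "inner (w n) y = 0 \<Longrightarrow> norm (g n *v y) \<le> sigma 2 (g n) * norm y" for n y
    unfolding w_def using SVn by blast
  have s1pos: "0 < sigma 1 (g n)" for n using s2pos s12 less_le_trans by blast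
  have Npos: "0 < N n" for n using s1pos s1N less_le_trans by blast
  have rho0: "0 \<le> \<rho> n" for n unfolding \<rho>_def using s1pos s2pos by (simp add: less_imp_le)
  have rholim: "\<rho> \<longlonglongrightarrow> 0"
  proof -
    have "\<rho> n = exp (- mu12 (g n))" for n
    proof -
      have "exp (- mu12 (g n)) = exp (ln (sigma 2 (g n)) - ln (sigma 1 (g n)))"
        unfolding mu12_def by simp
      also have "\<dots> = sigma 2 (g n) / sigma 1 (g n)" using s1pos s2pos by (simp add: exp_diff)
      finally show ?thesis unfolding \<rho>_def by simp
    qed
    moreover have "filterlim (\<lambda>n. - mu12 (g n)) at_bot sequentially"
      using assms(5) by (simp add: filterlim_uminus_at_bot)
    then have "(\<lambda>n. exp (- mu12 (g n))) \<longlonglongrightarrow> 0"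
      by (rule filterlim_compose[OF exp_at_bot])
    ultimately show ?thesis by (metis (no_types) ext)
  qed
  have orthb: "norm (g n *v y) \<le> \<rho> n * N n * norm y" if "inner (w n) y = 0" for n y
  proof -
    have "norm (g n *v y) \<le> sigma 2 (g n) * norm y" by (rule orthb0[OF that])
    also have "sigma 2 (g n) = \<rho> n * sigma 1 (g n)" unfolding \<rho>_def using s1pos[of n] by simp
    also have "\<rho> n * sigma 1 (g n) * norm y \<le> \<rho> n * N n * norm y"
      using rho0 s1N by (intro mult_right_mono mult_left_mono) auto
    finally show ?thesis .
  qed
  define P where "P n = (1 / N n) *\<^sub>R (g n *v w n)" for n
  have P1: "norm (P n) = 1" for n unfolding P_def N_def using Npos[of n] unfolding N_def by simp
  define Er where "Er n z = (1 / N n) *\<^sub>R (g n *v (z - inner z (w n) *\<^sub>R w n))" for n z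
  have dec: "(1 / N n) *\<^sub>R (g n *v z) = inner z (w n) *\<^sub>R P n + Er n z" for n z
    unfolding Er_def P_def by (simp add: matrix_vector_mult_diff_distrib matrix_vector_mult_scaleR algebra_simps)
  have Erb: "norm (Er n z) \<le> \<rho> n * norm z" for n z
  proof -
    have pc: "inner (w n) (z - inner z (w n) *\<^sub>R w n) = 0" "norm (z - inner z (w n) *\<^sub>R w n) \<le> norm z"
      using proj_complement_norm[OF w1] by auto
    have "norm (Er n z) = (1 / N n) * norm (g n *v (z - inner z (w n) *\<^sub>R w n))"
      unfolding Er_def using Npos[of n] by simp
    also have "\<dots> \<le> (1 / N n) * (\<rho> n * N n * norm (z - inner z (w n) *\<^sub>R w n))"
      using Npos[of n] orthb[OF pc(1)] by (intro mult_left_mono) auto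
    also have "\<dots> = \<rho> n * norm (z - inner z (w n) *\<^sub>R w n)" using Npos[of n] by simp
    also have "\<dots> \<le> \<rho> n * norm z" using rho0 pc(2) by (intro mult_left_mono) auto
    finally show ?thesis .
  qed
  have Kc: "\<exists>c>0. eventually (\<lambda>n. c \<le> \<bar>inner x0 (w n)\<bar>) sequentially"
  proof (rule ccontr)
    assume nK: "\<not> ?thesis"
    have freq: "\<exists>n\<ge>M. \<bar>inner x0 (w n)\<bar> < c" if "c > 0" for c M
    proof (rule ccontr)
      assume "\<not> ?thesis"
      then have "eventually (\<lambda>n. c \<le> \<bar>inner x0 (w n)\<bar>) sequentially"
        unfolding eventually_sequentially by (meson not_less)
      then show False using nK that by blast
    qed
    have "\<exists>r. \<forall>k. \<bar>inner x0 (w (r k))\<bar> < 1 / real (Suc k) \<and> r k < r (Suc k)"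
    proof (rule dependent_nat_choice)
      show "\<exists>x. \<bar>inner x0 (w x)\<bar> < 1 / real (Suc 0)" using freq[of 1 0] by auto
      fix x k
      obtain y where "y \<ge> Suc x" "\<bar>inner x0 (w y)\<bar> < 1 / real (Suc (Suc k))"
        using freq[of "1 / real (Suc (Suc k))" "Suc x"] by auto
      then show "\<exists>y. \<bar>inner x0 (w y)\<bar> < 1 / real (Suc (Suc k)) \<and> x < y" by auto
    qed
    then obtain r where r1: "\<And>k. \<bar>inner x0 (w (r k))\<bar> < 1 / real (Suc k)"
      and rm: "strict_mono r" unfolding strict_mono_Suc_iff by blast
    have sc: "seq_compact (sphere (0::real^'n) 1 \<times> sphere (0::real^'n) 1)"
      by (intro compact_imp_seq_compact compact_Times compact_sphere)
    have mem: "\<forall>k. (w (r k), P (r k)) \<in> sphere 0 1 \<times> sphere 0 1" using w1 P1 by simp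
    obtain l r2 where lS: "l \<in> sphere 0 1 \<times> sphere 0 1" and r2: "strict_mono r2"
      and lim: "((\<lambda>k. (w (r k), P (r k))) \<circ> r2) \<longlonglongrightarrow> l"
      using seq_compactE[OF sc mem] by blast
    obtain wi pinf where l: "l = (wi, pinf)" by (metis surj_pair)
    define R where "R = r \<circ> r2"
    have Rm: "strict_mono R" unfolding R_def using rm r2 by (rule strict_mono_o)
    have wlim: "(\<lambda>k. w (R k)) \<longlonglongrightarrow> wi" using tendsto_fst[OF lim] unfolding l R_def by (simp add: comp_def)
    have plim: "(\<lambda>k. P (R k)) \<longlonglongrightarrow> pinf" using tendsto_snd[OF lim] unfolding l R_def by (simp add: comp_def)
    have wi1: "norm wi = 1" and pi1: "norm pinf = 1" using lS l by auto
    have ilim0: "(\<lambda>k. inner x0 (w (R k))) \<longlonglongrightarrow> 0"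
    proof (rule Lim_null_comparison)
      show "eventually (\<lambda>k. norm (inner x0 (w (R k))) \<le> inverse (real (Suc k))) sequentially"
      proof (intro always_eventually allI)
        fix k
        have "\<bar>inner x0 (w (R k))\<bar> < 1 / real (Suc (r2 k))" unfolding R_def using r1 by simp
        also have "\<dots> \<le> 1 / real (Suc k)" using seq_suble[OF r2, of k] by (simp add: frac_le)
        finally show "norm (inner x0 (w (R k))) \<le> inverse (real (Suc k))" by (simp add: divide_inverse)
      qed
    qed (rule LIMSEQ_inverse_real_of_nat)
    have x0wi: "inner x0 wi = 0"
      using LIMSEQ_unique[OF ilim0 tendsto_inner[OF tendsto_const wlim]] by simp
    have rhoR: "(\<lambda>k. \<rho> (R k)) \<longlonglongrightarrow> 0" using LIMSEQ_subseq_LIMSEQ[OF rholim Rm] by (simp add: comp_def)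
    have glim: "(\<lambda>k. (1 / N (R k)) *\<^sub>R (g (R k) *v z)) \<longlonglongrightarrow> inner z wi *\<^sub>R pinf" for z
    proof -
      have "(\<lambda>k. inner z (w (R k)) *\<^sub>R P (R k)) \<longlonglongrightarrow> inner z wi *\<^sub>R pinf"
        by (intro tendsto_scaleR tendsto_inner tendsto_const wlim plim)
      moreover have "(\<lambda>k. Er (R k) z) \<longlonglongrightarrow> 0"
      proof (rule Lim_null_comparison)
        show "eventually (\<lambda>k. norm (Er (R k) z) \<le> \<rho> (R k) * norm z) sequentially" using Erb by simp
        show "(\<lambda>k. \<rho> (R k) * norm z) \<longlonglongrightarrow> 0" using tendsto_mult_left_zero[OF rhoR, of "norm z"] by simp
      qed
      ultimately have "(\<lambda>k. inner z (w (R k)) *\<^sub>R P (R k) + Er (R k) z) \<longlonglongrightarrow> inner z wi *\<^sub>R pinf + 0"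
        by (rule tendsto_add)
      then show ?thesis unfolding dec by simp
    qed
    obtain \<epsilon> where e0: "\<epsilon> > 0" and ball: "ball x0 \<epsilon> \<subseteq> C" using Copen x0C open_contains_ball by blast
    define y1 where "y1 = x0 + (\<epsilon>/2) *\<^sub>R wi"
    define y2 where "y2 = x0 - (\<epsilon>/2) *\<^sub>R wi"
    have "dist x0 y1 = \<epsilon>/2" unfolding y1_def dist_norm using wi1 e0 by simp
    then have y1C: "y1 \<in> C" using ball e0 by (simp add: subset_iff)
    have "dist x0 y2 = \<epsilon>/2" unfolding y2_def dist_norm using wi1 e0 by simp
    then have y2C: "y2 \<in> C" using ball e0 by (simp add: subset_iff)
    have wiwi: "inner wi wi = 1" using wi1 by (simp add: norm_eq_1)
    have iy1: "inner y1 wi = \<epsilon>/2" unfolding y1_def using x0wi wiwi by (simp add: inner_add_left)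
    have iy2: "inner y2 wi = - (\<epsilon>/2)" unfolding y2_def using x0wi wiwi by (simp add: inner_diff_left)
    define A where "A k = f ((1 / N (R k)) *\<^sub>R (g (R k) *v y1))" for k
    define B where "B k = f ((1 / N (R k)) *\<^sub>R (g (R k) *v y2))" for k
    have fcont: "(\<lambda>k. f (X k)) \<longlonglongrightarrow> f L" if "X \<longlonglongrightarrow> L" for X L
      unfolding f_def by (intro tendsto_inner tendsto_const that)
    have fs: "f (t *\<^sub>R x) = t * f x" for t x unfolding f_def by simp
    have Alim: "A \<longlonglongrightarrow> (\<epsilon>/2) * f pinf"
      using fcont[OF glim[of y1]] unfolding A_def iy1 fs .
    have Blim: "B \<longlonglongrightarrow> - (\<epsilon>/2) * f pinf"
      using fcont[OF glim[of y2]] unfolding B_def iy2 fs .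
    have ABpos: "A k * B k > 0" for k
    proof -
      have "A k * B k = (1 / N (R k))^2 * (f (g (R k) *v y1) * f (g (R k) *v y2))"
        unfolding A_def B_def fs by (simp add: power2_eq_square mult_ac)
      then show ?thesis using samesign[OF y1C y2C] Npos[of "R k"] by simp
    qed
    have "(\<lambda>k. A k * B k) \<longlonglongrightarrow> ((\<epsilon>/2) * f pinf) * (- (\<epsilon>/2) * f pinf)"
      by (rule tendsto_mult[OF Alim Blim])
    then have "0 \<le> ((\<epsilon>/2) * f pinf) * (- (\<epsilon>/2) * f pinf)"
      by (rule tendsto_lowerbound) (auto intro!: always_eventually less_imp_le ABpos)
    then have "((\<epsilon>/2) * f pinf)^2 \<le> 0" by (simp add: power2_eq_square)
    then have fp0: "f pinf = 0" using e0 by simp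
    define q where "q = (\<epsilon>/2) *\<^sub>R pinf"
    have q0: "q \<noteq> 0" unfolding q_def using e0 pi1 by auto
    have "q \<in> closure (C \<union> uminus ` C)"
    proof -
      have "(\<lambda>k. (1 / N (R k)) *\<^sub>R (g (R k) *v y1)) \<longlonglongrightarrow> q" using glim[of y1] unfolding iy1 q_def .
      moreover have "(1 / N (R k)) *\<^sub>R (g (R k) *v y1) \<in> C \<union> uminus ` C" for k
      proof -
        have t: "1 / N (R k) > 0" using Npos by simp
        from pres[OF y1C, of "R k"] show ?thesis
        proof
          assume "g (R k) *v y1 \<in> C" then show ?thesis using Ccone t by blast
        next
          assume "g (R k) *v y1 \<in> uminus ` C"
          then obtain u where "u \<in> C" "g (R k) *v y1 = - u" by blast
          then have "(1 / N (R k)) *\<^sub>R (g (R k) *v y1) = - ((1 / N (R k)) *\<^sub>R u)"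
            "(1 / N (R k)) *\<^sub>R u \<in> C" using Ccone t by auto
          then show ?thesis by blast
        qed
      qed
      ultimately show ?thesis unfolding closure_sequential
        by (intro exI[of _ "\<lambda>k. (1 / N (R k)) *\<^sub>R (g (R k) *v y1)"]) blast
    qed
    then have "q \<in> closure C \<or> - q \<in> closure C" using closure_neg by auto
    then have "f q \<noteq> 0"
    proof
      assume "q \<in> closure C" then show ?thesis using chart q0 unfolding f_def by blast
    next
      assume "- q \<in> closure C"
      moreover have "- q \<noteq> 0" using q0 by simp
      ultimately have "f (- q) \<noteq> 0" using chart unfolding f_def by blast
      then show ?thesis unfolding f_def by simp
    qed
    moreover have "f q = (\<epsilon>/2) * f pinf" unfolding q_def f_def by simp
    ultimately show False using fp0 by simp
  qed
  then obtain c where c0: "c > 0" and evc: "eventually (\<lambda>n. c \<le> \<bar>inner x0 (w n)\<bar>) sequentially" by blast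
  have final: "(\<lambda>n. proj_pt (g n *v x0) - E1 (g n)) \<longlonglongrightarrow> 0"
  proof -
    define a where "a n = inner x0 (w n)" for n
    define b where "b n = a n *\<^sub>R P n" for n
    define e where "e n = Er n x0" for n
    have nb: "norm (b n) = \<bar>a n\<bar>" for n unfolding b_def using P1 by simp
    have ale: "\<bar>a n\<bar> \<le> norm x0" for n
      unfolding a_def using Cauchy_Schwarz_ineq2[of x0 "w n"] w1[of n] by simp
    have elim: "e \<longlonglongrightarrow> 0"
    proof (rule Lim_null_comparison)
      show "eventually (\<lambda>n. norm (e n) \<le> \<rho> n * norm x0) sequentially"
        unfolding e_def using Erb by simp
      show "(\<lambda>n. \<rho> n * norm x0) \<longlonglongrightarrow> 0" using tendsto_mult_left_zero[OF rholim, of "norm x0"] by simp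
    qed
    have eqn: "proj_pt (g n *v x0) - E1 (g n) = proj_pt (b n + e n) - proj_pt (b n)" if "a n \<noteq> 0" for n
    proof -
      have "proj_pt (g n *v x0) = proj_pt ((1 / N n) *\<^sub>R (g n *v x0))"
        using Npos[of n] by (simp add: proj_pt_scale)
      also have "\<dots> = proj_pt (b n + e n)" unfolding dec b_def e_def a_def ..
      finally have 1: "proj_pt (g n *v x0) = proj_pt (b n + e n)" .
      have "E1 (g n) = proj_pt ((1 / N n) *\<^sub>R (g n *v w n))"
        unfolding E1_wmax w_def[symmetric] using Npos[of n] by (simp add: proj_pt_scale)
      also have "\<dots> = proj_pt (b n)" unfolding b_def P_def[symmetric] using that by (simp add: proj_pt_scale)
      finally show ?thesis using 1 by simp
    qed
    define K where "K = cball (0::real^'n) (norm x0 + 1) - ball 0 (c / 2)"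
    have cK: "compact K" unfolding K_def by (intro compact_diff compact_cball open_ball)
    have K0: "0 \<notin> K" unfolding K_def using c0 by simp
    have uc: "uniformly_continuous_on K proj_pt"
      by (rule compact_uniformly_continuous[OF proj_pt_cont[OF K0] cK])
    show ?thesis
      unfolding tendsto_iff
    proof (intro allI impI)
      fix \<epsilon> :: real assume "\<epsilon> > 0"
      then obtain \<delta> where d0: "\<delta> > 0" and dK: "\<forall>x\<in>K. \<forall>x'\<in>K. dist x' x < \<delta> \<longrightarrow> dist (proj_pt x') (proj_pt x) < \<epsilon>"
        using uc unfolding uniformly_continuous_on_def by metis
      have "min \<delta> (min (c/2) 1) > 0" using d0 c0 by simp
      then have eve: "eventually (\<lambda>n. dist (e n) 0 < min \<delta> (min (c/2) 1)) sequentially"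
        using elim unfolding tendsto_iff by blast
      show "eventually (\<lambda>n. dist (proj_pt (g n *v x0) - E1 (g n)) 0 < \<epsilon>) sequentially"
        using eve evc
      proof eventually_elim
        case (elim n)
        have ca: "c \<le> \<bar>a n\<bar>" using elim(2) unfolding a_def .
        then have an: "a n \<noteq> 0" using c0 by auto
        have ne: "norm (e n) < \<delta>" "norm (e n) < c / 2" "norm (e n) < 1" using elim(1) by auto
        have bK: "b n \<in> K" unfolding K_def using nb[of n] ale[of n] ca c0 by auto
        have "norm (b n + e n) \<ge> norm (b n) - norm (e n)" by (rule norm_diff_ineq[THEN order_trans]) (simp add: norm_minus_commute)
        moreover have "norm (b n + e n) \<le> norm (b n) + norm (e n)" by (rule norm_triangle_ineq)
        ultimately have beK: "b n + e n \<in> K" unfolding K_def using nb[of n] ale[of n] ca ne by auto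
        have "dist (b n + e n) (b n) < \<delta>" using ne by (simp add: dist_norm)
        then have "dist (proj_pt (b n + e n)) (proj_pt (b n)) < \<epsilon>" using dK bK beK by blast
        then show ?case unfolding eqn[OF an] by (simp add: dist_norm)
      qed
    qed
  qed
  have "acc_pts (\<lambda>n. proj_pt (g n *v x0)) = acc_pts (\<lambda>n. E1 (g n))" by (rule acc_eq[OF final])
  then show ?thesis using x0eq by simp
qed

end
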